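(* Let $\Omega,\Omega^*\subset\widehat{\mathbb C}$ be domains each containing $\infty$, and let $f\colon\Omega\to\Omega^*$ be a homeomorphism with $f(\infty)=\infty$. Suppose that each boundary component of $\Omega$ is a Jordan curve or a single point and that for each $\varepsilon>0$ there are at most finitely many Jordan curves in $\partial\Omega$ with diameter greater than $\varepsilon$. Then for every $z_0\in\partial\Omega$, the cluster set $\mathrm{Clu}(f;z_0)$ is a continuum (possibly degenerate).
   Context: The cluster set of $f$ at $z_0\in\partial\Omega$ is $\mathrm{Clu}(f;z_0)=\bigcap_{\varepsilon>0}\overline{f(B(z_0,\varepsilon)\cap\Omega)}$. A continuum is a nonempty compact connected set. *)

theory Defs
  imports "HOL-Analysis.Analysis"
begin

text \<open>The extended plane is modelled through the complex plane: a domain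
  \<Omega> \<subseteq> Riemann sphere containing \<infinity> is represented by U = \<Omega> - {\<infinity>},
  an open connected subset of the plane with bounded complement.
  Its boundary in the sphere is the ordinary frontier of U.\<close>

definition jordan_curve :: "complex set \<Rightarrow> bool" where
  "jordan_curve J \<longleftrightarrow>
     (\<exists>g. simple_path g \<and> pathfinish g = pathstart g \<and> J = path_image g)"

definition ext_domain :: "complex set \<Rightarrow> bool" where
  "ext_domain U \<longleftrightarrow> open U \<and> connected U \<and> bounded (- U)"

text \<open>Finite part of the cluster set (closure taken in the plane).\<close>
definition cluster_set :: "(complex \<Rightarrow> complex) \<Rightarrow> complex set \<Rightarrow> complex \<Rightarrow> complex set" where
  "cluster_set f U z0 = (\<Inter>\<epsilon>\<in>{0<..}. closure (f ` (ball z0 \<epsilon> \<inter> U)))"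

end

theory Submission
  imports Defs
begin

lemma comp_clopen:
  fixes X :: "complex set"
  assumes "compact X" "x \<in> X" "closed Z" "connected_component_set X x \<inter> Z = {}"
  obtains Q where "Q \<subseteq> X" "x \<in> Q" "Q \<inter> Z = {}" "closed Q" "closed (X - Q)"
proof -
  define T where "T = top_of_set X"
  have cs: "compact_space T" unfolding T_def
    by (simp add: assms(1) compact_space_subtopology)
  have hs: "Hausdorff_space T" unfolding T_def
    by (simp add: Hausdorff_space_subtopology)
  have qe: "quasi_components_of T = connected_components_of T"
    using quasi_eq_connected_components_of cs hs by blast
  define C where "C = quasi_component_of_set T x"
  have CQ: "C \<in> quasi_components_of T"
    unfolding C_def quasi_components_of_def T_def using assms(2) by auto
  then have "connectedin T C" using qe
    using connectedin_connected_components_of by auto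
  then have "connected C" "C \<subseteq> X" unfolding T_def
    by (auto simp: connectedin_subtopology)
  moreover have "x \<in> C" unfolding C_def T_def using assms(2) by simp
  ultimately have "C \<subseteq> connected_component_set X x"
    by (meson connected_component_maximal)
  then have dj: "disjnt C (X \<inter> Z)" using assms(4) by (auto simp: disjnt_def)
  have "compactin T (X \<inter> Z)" unfolding T_def
    by (simp add: compactin_subtopology assms compact_Int_closed)
  then have "separated_between T C (X \<inter> Z)"
    using separated_between_quasi_component_compact[OF CQ] dj by blast
  then obtain A B where AB: "openin T A" "openin T B" "A \<union> B = X" "disjnt A B" "C \<subseteq> A" "X \<inter> Z \<subseteq> B"
    unfolding separated_between_def T_def by auto
  have AX: "A = X - B" "B = X - A" using AB(3,4) by (auto simp: disjnt_def)
  have "closedin T A" using AB(2) AX(1) unfolding T_def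
    by (metis closedin_diff closedin_topspace topspace_euclidean_subtopology)
  then have cA: "closed A" unfolding T_def using assms(1) closedin_closed_trans compact_imp_closed by blast
  have "closedin T B" using AB(1) AX(2) unfolding T_def
    by (metis closedin_diff closedin_topspace topspace_euclidean_subtopology)
  then have cB: "closed B" unfolding T_def using assms(1) closedin_closed_trans compact_imp_closed by blast
  show ?thesis
  proof (rule that[of A])
    show "A \<subseteq> X" using AB(3) by auto
    show "x \<in> A" using AB(5) \<open>x \<in> C\<close> by auto
    show "A \<inter> Z = {}" using AB(3,4,6) by (auto simp: disjnt_def)
    show "closed A" by (rule cA)
    show "closed (X - A)" using cB AX(2) by metis
  qed
qed

lemma jordan_local:
  fixes J :: "complex set"
  assumes "jordan_curve J" "z0 \<in> J" "\<rho> > 0"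
  obtains \<delta> where "\<delta> > 0" "\<And>p q. p \<in> ball z0 \<delta> \<Longrightarrow> q \<in> ball z0 \<delta> \<Longrightarrow>
     connected_component (-J) p q \<Longrightarrow> connected_component (ball z0 \<rho> - J) p q"
proof -
  obtain \<gamma> where g: "simple_path \<gamma>" "pathfinish \<gamma> = pathstart \<gamma>" "J = path_image \<gamma>"
    using assms(1) unfolding jordan_curve_def by blast
  obtain u where u: "u \<in> {0..1}" "\<gamma> u = z0"
    using assms(2) g(3) unfolding path_image_def by auto
  define h where "h = shiftpath u \<gamma>"
  have sh: "simple_path h" unfolding h_def using simple_path_shiftpath g u by auto
  have h0: "h 0 = z0" using pathstart_shiftpath[of u \<gamma>] u unfolding h_def pathstart_def by auto
  have h1: "h 1 = z0" using pathfinish_shiftpath[of u \<gamma>] u g unfolding h_def pathfinish_def by auto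
  have hJ: "path_image h = J" unfolding h_def using path_image_shiftpath u g by auto
  have ch: "continuous_on {0..1} h" using sh unfolding simple_path_def path_def by auto
  then have "uniformly_continuous_on {0..1} h"
    by (simp add: compact_uniformly_continuous)
  then obtain \<tau> where \<tau>: "\<tau> > 0" "\<And>s t. s \<in> {0..1} \<Longrightarrow> t \<in> {0..1} \<Longrightarrow> dist t s < \<tau> \<Longrightarrow> dist (h t) (h s) < \<rho>"
    unfolding uniformly_continuous_on_def using assms(3) by metis
  define t' where "t' = min (\<tau>/2) (1/4)"
  have t': "t' > 0" "t' \<le> 1/4" "t' < \<tau>" using \<tau> unfolding t'_def by auto
  define A where "A = h ` {t'..1-t'}"
  have sub: "{t'..1-t'} \<subseteq> {0..1}" using t' by auto
  have cA: "compact A" unfolding A_def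
    by (rule compact_continuous_image[OF continuous_on_subset[OF ch sub]]) simp
  have coA: "connected A" unfolding A_def
    by (rule connected_continuous_image[OF continuous_on_subset[OF ch sub]]) simp
  define T where "T = A \<union> - ball z0 \<rho>"
  have clT: "closed T" unfolding T_def using closed_Un[OF compact_imp_closed[OF cA] closed_Compl[OF open_ball]] .
  have AJ: "A \<subseteq> J" unfolding A_def hJ[symmetric] path_image_def using sub by auto
  have JT: "J \<inter> T = A"
  proof
    show "A \<subseteq> J \<inter> T" using AJ unfolding T_def by auto
    show "J \<inter> T \<subseteq> A"
    proof
      fix x assume x: "x \<in> J \<inter> T"
      show "x \<in> A"
      proof (cases "x \<in> A")
        case False
        then have xb: "x \<notin> ball z0 \<rho>" using x unfolding T_def by auto
        obtain t where t: "t \<in> {0..1}" "h t = x" using x hJ unfolding path_image_def by auto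
        have "t \<notin> {t'..1-t'}" using False t unfolding A_def by auto
        then have "t < t' \<or> t > 1 - t'" by auto
        then show ?thesis
        proof
          assume "t < t'"
          then have "dist t 0 < \<tau>" using t t' by (auto simp: dist_real_def)
          then have "dist (h t) (h 0) < \<rho>" using \<tau>(2)[of 0 t] t by auto
          then show ?thesis using xb t h0 by (auto simp: dist_commute)
        next
          assume "t > 1 - t'"
          then have "dist t 1 < \<tau>" using t t' by (auto simp: dist_real_def)
          then have "dist (h t) (h 1) < \<rho>" using \<tau>(2)[of 1 t] t by auto
          then show ?thesis using xb t h1 by (auto simp: dist_commute)
        qed
      qed simp
    qed
  qed
  have z0A: "z0 \<notin> A"
  proof
    assume "z0 \<in> A"
    then obtain t where t: "t \<in> {t'..1-t'}" "h t = z0" unfolding A_def by auto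
    have "loop_free h" using sh unfolding simple_path_def by auto
    then have "t = 0 \<or> t = 1" using t h0 sub unfolding loop_free_def
      by (metis atLeastAtMost_iff subsetD zero_le_one order_refl)
    then show False using t t' by auto
  qed
  obtain \<delta>0 where \<delta>0: "\<delta>0 > 0" "ball z0 \<delta>0 \<subseteq> - A"
    using open_contains_ball[of "- A"] cA z0A by (auto simp: compact_imp_closed open_Compl)
  define \<delta> where "\<delta> = min \<delta>0 \<rho>"
  show ?thesis
  proof (rule that[of \<delta>])
    show "\<delta> > 0" using \<delta>0 assms(3) unfolding \<delta>_def by auto
    fix p q assume p: "p \<in> ball z0 \<delta>" and q: "q \<in> ball z0 \<delta>" and pq: "connected_component (-J) p q"
    have "ball z0 \<delta> \<subseteq> - T" using \<delta>0 unfolding T_def \<delta>_def by auto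
    then have "connected_component (-T) p q"
      using p q by (meson connected_ball connected_componentI)
    then have "connected_component (- (J \<union> T)) p q"
      using Janiszewski[of J T p q] g(1) g(3) clT JT coA pq
      by (simp add: compact_simple_path_image)
    moreover have "- (J \<union> T) \<subseteq> ball z0 \<rho> - J" unfolding T_def by auto
    ultimately show "connected_component (ball z0 \<rho> - J) p q"
      using connected_component_of_subset by blast
  qed
qed


lemma local_conn:
  fixes U :: "complex set"
  assumes dom: "ext_domain U"
    and comps: "\<forall>C\<in>components (frontier U). jordan_curve C \<or> (\<exists>a. C = {a})"
    and fin: "\<forall>\<epsilon>>0. finite {J. J \<subseteq> frontier U \<and> jordan_curve J \<and> diameter J > \<epsilon>}"
    and z0: "z0 \<in> frontier U" and e: "\<epsilon> > 0"
  obtains \<delta> where "\<delta> > 0" "\<delta> \<le> \<epsilon>"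
    "\<And>p q. p \<in> U \<inter> ball z0 \<delta> \<Longrightarrow> q \<in> U \<inter> ball z0 \<delta> \<Longrightarrow> connected_component (U \<inter> ball z0 \<epsilon>) p q"
proof -
  define X where "X = frontier U"
  have oU: "open U" and cU: "connected U" and bU: "bounded (- U)"
    using dom unfolding ext_domain_def by auto
  have XU: "X \<inter> U = {}" unfolding X_def using oU frontier_disjoint_eq by blast
  have XsU: "X \<subseteq> - U" using XU by auto
  have cX: "compact X" unfolding X_def
    using XsU bU unfolding X_def by (metis bounded_subset frontier_closed compact_eq_bounded_closed)
  define \<eta> where "\<eta> = \<epsilon>/4"
  have \<eta>: "\<eta> > 0" using e unfolding \<eta>_def by auto
  define Big where "Big = {J. J \<subseteq> X \<and> jordan_curve J \<and> diameter J > \<eta>}"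
  have fB: "finite Big" using fin \<eta> unfolding Big_def X_def by auto
  define D0 where "D0 = connected_component_set X z0"
  define Bf where "Bf = {J \<in> Big. z0 \<notin> J}"
  define Y where "Y = \<Union>Bf"
  have jc: "compact J" if "jordan_curve J" for J
    using that unfolding jordan_curve_def using compact_simple_path_image by auto
  have clY: "closed Y" unfolding Y_def
    apply (rule closed_Union)
    subgoal unfolding Bf_def using fB by simp
    subgoal unfolding Bf_def Big_def using jc compact_imp_closed by blast
    done
  have z0Y: "z0 \<notin> Y" unfolding Y_def Bf_def by auto
  obtain r0 where r0: "r0 > 0" "ball z0 r0 \<subseteq> - Y"
    using open_contains_ball[of "- Y"] clY z0Y by (auto simp: open_Compl)
  define r where "r = min r0 (\<epsilon>/2)"
  have r: "r > 0" "r \<le> \<epsilon>/2" "r \<le> r0" using r0 e unfolding r_def by auto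
  have z0X: "z0 \<in> X" using z0 unfolding X_def by auto
  have clD0: "closed D0" unfolding D0_def using cX by (simp add: closed_connected_component compact_imp_closed)
  have C1: "\<exists>Q. Q \<subseteq> X \<and> x \<in> Q \<and> Q \<inter> (- ball z0 \<epsilon> \<union> D0) = {} \<and> closed Q \<and> closed (X - Q)"
    if x: "x \<in> X" "x \<in> ball z0 r" "x \<notin> D0" for x
  proof -
    define Dx where "Dx = connected_component_set X x"
    have DxC: "Dx \<in> components X" unfolding Dx_def using x by (simp add: componentsI)
    have DxX: "Dx \<subseteq> X" unfolding Dx_def by (simp add: connected_component_subset)
    have xDx: "x \<in> Dx" unfolding Dx_def using x by simp
    have z0Dx: "z0 \<notin> Dx"
    proof
      assume "z0 \<in> Dx"
      then have "D0 = Dx" unfolding D0_def Dx_def by (simp add: connected_component_eq)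
      then show False using x xDx by simp
    qed
    have sub: "Dx \<subseteq> ball z0 \<epsilon>"
    proof (cases "\<exists>a. Dx = {a}")
      case True
      then show ?thesis using xDx x r by auto
    next
      case False
      then have jD: "jordan_curve Dx" using comps DxC unfolding X_def by auto
      show ?thesis
      proof (cases "diameter Dx > \<eta>")
        case True
        then have "Dx \<in> Bf" unfolding Bf_def Big_def using jD DxX z0Dx by auto
        then have "x \<in> Y" unfolding Y_def using xDx by auto
        moreover have "x \<in> ball z0 r0" using x r by auto
        ultimately show ?thesis using r0 by auto
      next
        case False
        show ?thesis
        proof
          fix y assume y: "y \<in> Dx"
          have "dist x y \<le> diameter Dx"
            using diameter_bounded_bound[OF compact_imp_bounded[OF jc[OF jD]] xDx y] .
          then have "dist x y \<le> \<eta>" using False by auto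
          moreover have "dist z0 x < r" using x by auto
          ultimately have "dist z0 y < \<epsilon>" using r unfolding \<eta>_def
            using dist_triangle[of z0 y x] by linarith
          then show "y \<in> ball z0 \<epsilon>" by simp
        qed
      qed
    qed
    have dj: "Dx \<inter> D0 = {}" unfolding Dx_def D0_def
      using connected_component_nonoverlap[of X x z0] z0Dx z0X unfolding Dx_def D0_def by auto
    have "Dx \<inter> (- ball z0 \<epsilon> \<union> D0) = {}" using sub dj by auto
    moreover have "closed (- ball z0 \<epsilon> \<union> D0)"
      using clD0 by (simp add: closed_Un open_ball closed_Compl)
    ultimately obtain Q where "Q \<subseteq> X" "x \<in> Q" "Q \<inter> (- ball z0 \<epsilon> \<union> D0) = {}" "closed Q" "closed (X - Q)"
      using comp_clopen[OF cX x(1)] unfolding Dx_def by metis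
    then show ?thesis by blast
  qed
  have UD0: "connected_component (-D0) p q" if "p \<in> U" "q \<in> U" for p q
  proof -
    have "U \<subseteq> - D0" using XU unfolding D0_def using connected_component_subset by blast
    then show ?thesis using that cU by (meson connected_componentI)
  qed
  obtain \<delta>1 where \<delta>1: "\<delta>1 > 0" "\<delta>1 \<le> r"
    "\<And>p q. p \<in> U \<inter> ball z0 \<delta>1 \<Longrightarrow> q \<in> U \<inter> ball z0 \<delta>1 \<Longrightarrow> connected_component (ball z0 r - D0) p q"
  proof (cases "jordan_curve D0")
    case True
    obtain \<delta>J where \<delta>J: "\<delta>J > 0" "\<And>p q. p \<in> ball z0 \<delta>J \<Longrightarrow> q \<in> ball z0 \<delta>J \<Longrightarrow>
     connected_component (-D0) p q \<Longrightarrow> connected_component (ball z0 r - D0) p q"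
      using jordan_local[OF True _ r(1), of z0] z0X unfolding D0_def by auto
    show ?thesis
      apply (rule that[of "min \<delta>J r"])
      using \<delta>J r UD0 by auto
  next
    case False
    have "D0 \<in> components X" unfolding D0_def using z0X by (simp add: componentsI)
    then obtain a where "D0 = {a}" using comps False unfolding X_def by auto
    then have D0z: "D0 = {z0}" unfolding D0_def using z0X by auto
    have "aff_dim (ball z0 r) = 2" using aff_dim_open[of "ball z0 r"] r by simp
    then have conn: "connected (ball z0 r - {z0})"
      using connected_punctured_convex[of "ball z0 r" z0] by simp
    show ?thesis
    proof (rule that[of r])
      fix p q assume "p \<in> U \<inter> ball z0 r" "q \<in> U \<inter> ball z0 r"
      moreover have "z0 \<notin> U" using z0X XU by auto
      ultimately have "p \<in> ball z0 r - {z0}" "q \<in> ball z0 r - {z0}" by auto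
      then show "connected_component (ball z0 r - D0) p q"
        unfolding D0z using connected_componentI[OF conn order_refl] by blast
    qed (use r in auto)
  qed
  show ?thesis
  proof (rule that[of \<delta>1])
    show "\<delta>1 > 0" "\<delta>1 \<le> \<epsilon>" using \<delta>1 r e by auto
    fix p q assume p: "p \<in> U \<inter> ball z0 \<delta>1" and q: "q \<in> U \<inter> ball z0 \<delta>1"
    show "connected_component (U \<inter> ball z0 \<epsilon>) p q"
    proof (rule ccontr)
      assume nc: "\<not> connected_component (U \<inter> ball z0 \<epsilon>) p q"
      define M where "M = X \<union> - ball z0 \<epsilon>"
      have clM: "closed M" unfolding M_def using cX
        by (simp add: closed_Un open_ball closed_Compl compact_imp_closed)
      have ncM: "\<not> connected_component (- M) p q"
      proof
        assume "connected_component (- M) p q"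
        then obtain T where T: "connected T" "T \<subseteq> - M" "p \<in> T" "q \<in> T"
          unfolding connected_component_def by auto
        have "T \<subseteq> U"
        proof (rule ccontr)
          assume "\<not> T \<subseteq> U"
          then have "T - U \<noteq> {}" by auto
          moreover have "T \<inter> U \<noteq> {}" using T p by auto
          ultimately have "T \<inter> frontier U \<noteq> {}" using connected_Int_frontier T(1) by blast
          then show False using T(2) unfolding M_def X_def by auto
        qed
        moreover have "T \<subseteq> ball z0 \<epsilon>" using T(2) unfolding M_def by auto
        ultimately have "connected_component (U \<inter> ball z0 \<epsilon>) p q"
          using T unfolding connected_component_def by blast
        then show False using nc by simp
      qed
      obtain C where C: "C \<in> components M" "\<not> connected_component (- C) p q"
        using separation_by_component_closed_pointwise[OF clM ncM] by blast
      have coC: "connected C" and CM: "C \<subseteq> M" using in_components_connected[OF C(1)] in_components_subset[OF C(1)] by auto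
      show False
      proof (cases "C \<subseteq> X")
        case True
        then have "U \<subseteq> - C" using XU by auto
        then have "connected_component (- C) p q" using p q cU by (meson IntD1 connected_componentI)
        then show False using C by simp
      next
        case False
        then obtain y where y: "y \<in> C" "y \<notin> X" by auto
        then have yb: "y \<notin> ball z0 \<epsilon>" using CM unfolding M_def by auto
        have "C \<inter> (ball z0 r - D0) = {}"
        proof (rule ccontr)
          assume "C \<inter> (ball z0 r - D0) \<noteq> {}"
          then obtain x where x: "x \<in> C" "x \<in> ball z0 r" "x \<notin> D0" by auto
          have "x \<in> X" using x CM r unfolding M_def by auto
          then obtain Q where Q: "Q \<subseteq> X" "x \<in> Q" "Q \<inter> (- ball z0 \<epsilon> \<union> D0) = {}" "closed Q" "closed (X - Q)"
            using C1 x by blast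
          have cl2: "closed ((X - Q) \<union> - ball z0 \<epsilon>)" using Q(5)
            by (simp add: closed_Un open_ball closed_Compl)
          have "C \<subseteq> Q \<union> ((X - Q) \<union> - ball z0 \<epsilon>)" using CM unfolding M_def by auto
          moreover have "Q \<inter> ((X - Q) \<union> - ball z0 \<epsilon>) \<inter> C = {}" using Q(3) by auto
          moreover have "Q \<inter> C \<noteq> {}" using Q x by auto
          moreover have "((X - Q) \<union> - ball z0 \<epsilon>) \<inter> C \<noteq> {}" using y yb by auto
          ultimately have "\<exists>A B. closed A \<and> closed B \<and> C \<subseteq> A \<union> B \<and> A \<inter> B \<inter> C = {} \<and> A \<inter> C \<noteq> {} \<and> B \<inter> C \<noteq> {}"
            using Q(4) cl2 by blast
          then show False using coC unfolding connected_closed by blast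
        qed
        then have "ball z0 r - D0 \<subseteq> - C" by auto
        then have "connected_component (- C) p q"
          using \<delta>1(3)[OF p q] connected_component_of_subset by blast
        then show False using C by simp
      qed
    qed
  qed
qed


theorem proposition3p5:
  fixes U V :: "complex set" and f g :: "complex \<Rightarrow> complex" and z0 :: complex
  assumes "ext_domain U" and "ext_domain V"
    and "homeomorphism U V f g"
    and "filterlim f at_infinity (inf at_infinity (principal U))"
    and "filterlim g at_infinity (inf at_infinity (principal V))"
    and "\<forall>C\<in>components (frontier U). jordan_curve C \<or> (\<exists>a. C = {a})"
    and "\<forall>\<epsilon>>0. finite {J. J \<subseteq> frontier U \<and> jordan_curve J \<and> diameter J > \<epsilon>}"
    and "z0 \<in> frontier U"
  shows "(\<exists>\<epsilon>>0. bounded (f ` (ball z0 \<epsilon> \<inter> U)))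
         \<and> cluster_set f U z0 \<noteq> {} \<and> compact (cluster_set f U z0)
         \<and> connected (cluster_set f U z0)"
proof -
  have oU: "open U" using assms(1) unfolding ext_domain_def by auto
  have fU: "f ` U = V" and gV: "g ` V = U" and cf: "continuous_on U f"
    and gf: "\<And>x. x \<in> U \<Longrightarrow> g (f x) = x"
    using assms(3) unfolding homeomorphism_def by auto
  have "\<forall>r>0. eventually (\<lambda>x. r \<le> norm (g x)) (inf at_infinity (principal V))"
    using assms(5) filterlim_at_infinity[of 0 g] by auto
  moreover have "0 < norm z0 + 2" by (simp add: add_nonneg_pos)
  ultimately have "eventually (\<lambda>x. norm z0 + 2 \<le> norm (g x)) (inf at_infinity (principal V))"
    by blast
  then obtain R where R: "\<And>w. R \<le> norm w \<Longrightarrow> w \<in> V \<Longrightarrow> norm z0 + 2 \<le> norm (g w)"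
    unfolding eventually_inf_principal eventually_at_infinity by blast
  have sub1: "f ` (ball z0 1 \<inter> U) \<subseteq> cball 0 R"
  proof
    fix w assume "w \<in> f ` (ball z0 1 \<inter> U)"
    then obtain z where z: "z \<in> ball z0 1" "z \<in> U" "w = f z" by auto
    have wV: "w \<in> V" using z fU by auto
    have "norm z < norm z0 + 1" using z(1) norm_triangle_ineq2[of z z0]
      by (auto simp: dist_norm norm_minus_commute)
    then have "\<not> R \<le> norm w" using R[OF _ wV] gf[OF z(2)] z(3) by force
    then show "w \<in> cball 0 R" by simp
  qed
  then have bd1: "bounded (f ` (ball z0 1 \<inter> U))" using bounded_cball bounded_subset by blast
  define B where "B e = closure (f ` (ball z0 e \<inter> U))" for e
  have Bmono: "B e \<subseteq> B e'" if "e \<le> e'" for e e'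
    unfolding B_def using that by (intro closure_mono image_mono) auto
  have cB1: "compact (B 1)" unfolding B_def using bd1 by (simp add: compact_closure)
  have "\<forall>e>0. \<exists>\<delta>. \<delta> > 0 \<and> \<delta> \<le> e \<and> (\<forall>p q. p \<in> U \<inter> ball z0 \<delta> \<longrightarrow> q \<in> U \<inter> ball z0 \<delta> \<longrightarrow> connected_component (U \<inter> ball z0 e) p q)"
  proof (intro allI impI)
    fix e :: real assume "e > 0"
    then obtain \<delta> where "\<delta> > 0" "\<delta> \<le> e"
      "\<And>p q. p \<in> U \<inter> ball z0 \<delta> \<Longrightarrow> q \<in> U \<inter> ball z0 \<delta> \<Longrightarrow> connected_component (U \<inter> ball z0 e) p q"
      using local_conn[OF assms(1) assms(6) assms(7) assms(8)] by metis
    then show "\<exists>\<delta>. \<delta> > 0 \<and> \<delta> \<le> e \<and> (\<forall>p q. p \<in> U \<inter> ball z0 \<delta> \<longrightarrow> q \<in> U \<inter> ball z0 \<delta> \<longrightarrow> connected_component (U \<inter> ball z0 e) p q)"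
      by blast
  qed
  then obtain d where d: "\<And>e. e > 0 \<Longrightarrow> d e > 0 \<and> d e \<le> e \<and> (\<forall>p q. p \<in> U \<inter> ball z0 (d e) \<longrightarrow> q \<in> U \<inter> ball z0 (d e) \<longrightarrow> connected_component (U \<inter> ball z0 e) p q)"
    by metis
  have z0cl: "z0 \<in> closure U" using assms(8) unfolding frontier_def by auto
  have "\<forall>e>0. \<exists>p. p \<in> U \<inter> ball z0 e"
    using z0cl unfolding closure_approachable by (metis IntI dist_commute mem_ball)
  then obtain pt where pt: "\<And>e. e > 0 \<Longrightarrow> pt e \<in> U \<inter> ball z0 e" by metis
  define W where "W e = connected_component_set (U \<inter> ball z0 e) (pt (d e))" for e
  have W1: "U \<inter> ball z0 (d e) \<subseteq> W e" if "e > 0" for e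
  proof
    fix q assume q: "q \<in> U \<inter> ball z0 (d e)"
    have "pt (d e) \<in> U \<inter> ball z0 (d e)" using pt d that by auto
    then show "q \<in> W e" unfolding W_def using d[OF that] q by auto
  qed
  have W2: "W e \<subseteq> U \<inter> ball z0 e" for e unfolding W_def by (rule connected_component_subset)
  have W3: "connected (W e)" for e unfolding W_def by simp
  define es where "es = rec_nat 1 (\<lambda>_ x. d x / 2)"
  have es0: "es 0 = 1" and esS: "es (Suc n) = d (es n) / 2" for n unfolding es_def by simp_all
  have espos: "es n > 0" for n
    by (induction n) (auto simp: es0 esS d)
  have esle: "es n \<le> (1/2)^n" for n
  proof (induction n)
    case 0 then show ?case by (simp add: es0)
  next
    case (Suc n)
    have "d (es n) \<le> es n" using d[OF espos[of n]] by auto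
    then show ?case using Suc by (simp add: esS)
  qed
  have es1: "es n \<le> 1" for n using esle[of n] power_le_one[of "1/2::real" n] by linarith
  define S where "S n = closure (f ` W (es n))" for n
  have SB: "S n \<subseteq> B (es n)" for n unfolding S_def B_def using W2[of "es n"]
    by (intro closure_mono image_mono) auto
  have BS: "B (d (es n)) \<subseteq> S n" for n unfolding S_def B_def using W1[OF espos[of n]]
    by (intro closure_mono image_mono) auto
  have Scomp: "compact (S n)" for n
  proof -
    have "S n \<subseteq> B 1" using SB[of n] Bmono[OF es1[of n]] by auto
    then have "bounded (S n)" using cB1 compact_imp_bounded bounded_subset by blast
    then have "bounded (f ` W (es n))" unfolding S_def by (meson bounded_subset closure_subset)
    then show ?thesis unfolding S_def by (simp add: compact_closure)
  qed
  have Sconn: "connected (S n)" for n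
    unfolding S_def using W2 W3 cf
    by (intro connected_imp_connected_closure connected_continuous_image) (auto intro: continuous_on_subset)
  have Sne: "S n \<noteq> {}" for n
  proof -
    have "pt (d (es n)) \<in> W (es n)" using W1[OF espos[of n]] pt d espos by blast
    then show ?thesis unfolding S_def by auto
  qed
  have SSuc: "S (Suc n) \<subseteq> S n" for n
  proof -
    have "es (Suc n) \<le> d (es n)" using esS[of n] d[OF espos[of n]] by linarith
    then have "S (Suc n) \<subseteq> B (d (es n))" using SB[of "Suc n"] Bmono by blast
    then show ?thesis using BS by blast
  qed
  have Snest: "S n \<subseteq> S m" if "m \<le> n" for m n
    using lift_Suc_antimono_le[of S, OF SSuc that] .
  have eq: "cluster_set f U z0 = \<Inter> (range S)"
  proof
    show "cluster_set f U z0 \<subseteq> \<Inter> (range S)"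
    proof
      fix x assume x: "x \<in> cluster_set f U z0"
      show "x \<in> \<Inter> (range S)"
      proof (rule INT_I)
        fix n
        have "d (es n) > 0" using d espos by blast
        then have "x \<in> B (d (es n))" using x unfolding cluster_set_def B_def by auto
        then show "x \<in> S n" using BS by auto
      qed
    qed
    show "\<Inter> (range S) \<subseteq> cluster_set f U z0"
    proof
      fix x assume x: "x \<in> \<Inter> (range S)"
      show "x \<in> cluster_set f U z0" unfolding cluster_set_def
      proof
        fix e :: real assume "e \<in> {0<..}"
        then have e: "e > 0" by simp
        obtain n where "(1/2::real)^n < e" using real_arch_pow_inv[OF e, of "1/2"] by auto
        then have "es n \<le> e" using esle[of n] by linarith
        then have "S n \<subseteq> B e" using SB Bmono by blast
        then show "x \<in> closure (f ` (ball z0 e \<inter> U))" using x unfolding B_def by auto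
      qed
    qed
  qed
  show ?thesis
  proof (intro conjI)
    show "\<exists>\<epsilon>>0. bounded (f ` (ball z0 \<epsilon> \<inter> U))" using bd1 by (intro exI[of _ 1]) auto
    show "cluster_set f U z0 \<noteq> {}" unfolding eq using compact_nest[of S] Scomp Sne Snest by blast
    show "connected (cluster_set f U z0)" unfolding eq using connected_nest[of S] Scomp Sconn Snest by blast
    have "closed (\<Inter> (range S))" using Scomp by (simp add: closed_INT compact_imp_closed)
    moreover have "bounded (\<Inter> (range S))"
      using compact_imp_bounded[OF Scomp[of 0]] by (rule bounded_subset) auto
    ultimately show "compact (cluster_set f U z0)" unfolding eq by (simp add: compact_eq_bounded_closed)
  qed
qed

end
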